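(* Let $(G,\omega,\mu)$ be an infinite, connected weighted graph, and let $d$ be a pseudo metric on $G$ which is intrinsic, has finite jump size $s$, and such that every ball $B_r(x)$ ($x\in G$, $r>0$) is a finite set. Let $V:G\to\mathbb{R}$ satisfy $c_0:=\inf_G V>0$. Let $u:G\to\mathbb{R}$ be a solution of $$\Delta u - Vu = 0 \quad\text{in } G.$$ Let $p\ge 2$ and $\beta>0$ be such that $$\beta^2 e^{2s\beta} < 2c_0 p .$$ Fix $x_0\in G$ and suppose $u\in \ell^p_{\varphi_\beta}(G,\mu)$, where $\varphi_\beta(x)=e^{-\beta d(x,x_0)}$. Then $u(x)=0$ for all $x\in G$.
   Context: A weighted graph $(G,\omega,\mu)$: $G$ is a countable set, $\mu:G\to(0,\infty)$, and $\omega:G\times G\to[0,\infty)$ satisfies $\omega(x,x)=0$, $\omega(x,y)=\omega(y,x)$, $\sum_{y}\omega(x,y)<\infty$ for all $x$. Write $x\sim y$ iff $\omega(x,y)>0$; the graph is connected if any two vertices are joined by a finite path $x_0\sim x_1\sim\dots\sim x_n$. The Laplacian is $\Delta f(x)=\frac{1}{\mu(x)}\sum_{y\in G}[f(y)-f(x)]\omega(x,y)$ (well defined here since the graph is locally finite under the assumptions). A pseudo metric $d$ on $G$ is a symmetric function $G\times G\to[0,\infty)$ with $d(x,x)=0$ satisfying the triangle inequality (possibly $d(x,y)=0$ for $x\ne y$). Its jump size is $s:=\sup\{d(x,y): x,y\in G,\ \omega(x,y)>0\}$. For $q\ge1$, $C_0>0$, $d$ is $q$-intrinsic with bound $C_0$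 if $\frac{1}{\mu(x)}\sum_{y}\omega(x,y)d^q(x,y)\le C_0$ for all $x\in G$; $d$ is called intrinsic if it is $2$-intrinsic with bound $1$. Balls: $B_r(x_0)=\{x\in G: d(x,x_0)<r\}$. For $\varphi:G\to(0,\infty)$ and $p\in[1,\infty)$, $\ell^p_\varphi(G,\mu)=\{u:G\to\mathbb{R}:\ \sum_{x\in G}|u(x)|^p\varphi(x)\mu(x)<\infty\}$. *)

theory Defs
  imports "HOL-Analysis.Analysis"
begin

text \<open>The vertex set G is the universe of a type 'a (assumed countable).
  Weights w :: 'a => 'a => real, measure mu :: 'a => real.\<close>

definition weighted_graph :: "('a \<Rightarrow> 'a \<Rightarrow> real) \<Rightarrow> ('a \<Rightarrow> real) \<Rightarrow> bool" where
  "weighted_graph w mu \<longleftrightarrow> countable (UNIV :: 'a set) \<and>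
     (\<forall>x. mu x > 0) \<and> (\<forall>x y. w x y \<ge> 0) \<and> (\<forall>x. w x x = 0) \<and>
     (\<forall>x y. w x y = w y x) \<and> (\<forall>x. (\<lambda>y. w x y) summable_on UNIV)"

definition graph_connected :: "('a \<Rightarrow> 'a \<Rightarrow> real) \<Rightarrow> bool" where
  "graph_connected w \<longleftrightarrow> (\<forall>x y. (\<lambda>a b. w a b > 0)\<^sup>*\<^sup>* x y)"

definition laplacian :: "('a \<Rightarrow> 'a \<Rightarrow> real) \<Rightarrow> ('a \<Rightarrow> real) \<Rightarrow> ('a \<Rightarrow> real) \<Rightarrow> 'a \<Rightarrow> real" where
  "laplacian w mu f x = (1 / mu x) * (\<Sum>\<^sub>\<infinity>y. (f y - f x) * w x y)"

definition pseudo_metric :: "('a \<Rightarrow> 'a \<Rightarrow> real) \<Rightarrow> bool" where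
  "pseudo_metric d \<longleftrightarrow> (\<forall>x y. d x y \<ge> 0) \<and> (\<forall>x. d x x = 0) \<and>
     (\<forall>x y. d x y = d y x) \<and> (\<forall>x y z. d x z \<le> d x y + d y z)"

definition jump_size :: "('a \<Rightarrow> 'a \<Rightarrow> real) \<Rightarrow> ('a \<Rightarrow> 'a \<Rightarrow> real) \<Rightarrow> real" where
  "jump_size w d = Sup {d x y | x y. w x y > 0}"

definition finite_jump_size :: "('a \<Rightarrow> 'a \<Rightarrow> real) \<Rightarrow> ('a \<Rightarrow> 'a \<Rightarrow> real) \<Rightarrow> bool" where
  "finite_jump_size w d \<longleftrightarrow> bdd_above {d x y | x y. w x y > 0}"

definition q_intrinsic :: "real \<Rightarrow> real \<Rightarrow> ('a \<Rightarrow> 'a \<Rightarrow> real) \<Rightarrow> ('a \<Rightarrow> real) \<Rightarrow> ('a \<Rightarrow> 'a \<Rightarrow> real) \<Rightarrow> bool" where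
  "q_intrinsic q C0 w mu d \<longleftrightarrow> (\<forall>x. (\<lambda>y. w x y * d x y powr q) summable_on UNIV \<and>
       (1 / mu x) * (\<Sum>\<^sub>\<infinity>y. w x y * d x y powr q) \<le> C0)"

definition intrinsic :: "('a \<Rightarrow> 'a \<Rightarrow> real) \<Rightarrow> ('a \<Rightarrow> real) \<Rightarrow> ('a \<Rightarrow> 'a \<Rightarrow> real) \<Rightarrow> bool" where
  "intrinsic w mu d \<longleftrightarrow> q_intrinsic 2 1 w mu d"

definition ball_d :: "('a \<Rightarrow> 'a \<Rightarrow> real) \<Rightarrow> 'a \<Rightarrow> real \<Rightarrow> 'a set" where
  "ball_d d x0 r = {x. d x x0 < r}"

definition lp_weighted :: "real \<Rightarrow> ('a \<Rightarrow> real) \<Rightarrow> ('a \<Rightarrow> real) \<Rightarrow> ('a \<Rightarrow> real) \<Rightarrow> bool" where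
  "lp_weighted p phi mu u \<longleftrightarrow> (\<lambda>x. \<bar>u x\<bar> powr p * phi x * mu x) summable_on UNIV"

end

theory Submission
  imports Defs "HOL-Analysis.Analysis" "HOL-Real_Asymp.Real_Asymp"
begin


lemma tangent_powr:
  fixes A t q :: real
  assumes "A > 0" "t \<ge> 0" "q \<ge> 1"
  shows "t powr q - A powr q \<ge> q * A powr (q - 1) * (t - A)"
proof (cases "t = 0")
  case True
  have "A powr q = A powr (q-1) * A" using assms(1) by (simp add: powr_diff)
  hence "q * A powr (q - 1) * (0 - A) = - (q * A powr q)" by simp
  also have "\<dots> \<le> - (A powr q)" using assms by simp
  finally show ?thesis using True by simp
next
  case False
  hence t: "t \<in> {0<..}" using assms by auto
  have "q * A powr (q - 1) * (t - A) \<le> t powr q - A powr q"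
    using powr_convex[OF assms(3)] t assms(1)
    by (intro convex_on_imp_above_tangent[where A = "{0<..}"])
       (auto intro!: derivative_eq_intros simp: interior_open)
  thus ?thesis by simp
qed

lemma pointwise_p:
  fixes a b q :: real
  assumes "q \<ge> 1"
  shows "\<bar>a\<bar> powr q * (\<bar>b\<bar> powr q - \<bar>a\<bar> powr q) \<ge> q * (sgn a * \<bar>a\<bar> powr (2*q - 1)) * (b - a)"
proof (cases "a = 0")
  case True thus ?thesis by simp
next
  case False
  define A where "A = \<bar>a\<bar>"
  have A: "A > 0" using False A_def by simp
  define c where "c = sgn a * b"
  have sa: "sgn a * (b - a) = c - A" using False unfolding c_def A_def
    by (cases "a > 0") (auto simp: algebra_simps)
  have tb: "\<bar>b\<bar> powr q - A powr q \<ge> q * A powr (q - 1) * (\<bar>b\<bar> - A)"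
    using tangent_powr[OF A _ assms] by simp
  have "c \<le> \<bar>b\<bar>" unfolding c_def by (cases "a > 0") (use False in auto)
  hence "q * A powr (q - 1) * (c - A) \<le> q * A powr (q - 1) * (\<bar>b\<bar> - A)"
    using assms by (intro mult_left_mono) auto
  with tb have t2: "q * A powr (q - 1) * (c - A) \<le> \<bar>b\<bar> powr q - A powr q" by linarith
  have e: "A powr (2*q - 1) = A powr q * A powr (q - 1)"
    using A by (simp add: powr_add[symmetric])
  have "q * (sgn a * \<bar>a\<bar> powr (2*q - 1)) * (b - a) = A powr q * (q * A powr (q - 1)) * (sgn a * (b - a))"
    using e unfolding A_def[symmetric] by (simp add: algebra_simps)
  also have "\<dots> = A powr q * (q * A powr (q - 1) * (c - A))"
    by (simp only: sa mult.assoc)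
  also have "\<dots> \<le> A powr q * (\<bar>b\<bar> powr q - A powr q)"
    using t2 by (intro mult_left_mono) auto
  finally show ?thesis unfolding A_def .
qed

lemma exp_bound:
  fixes z :: real
  shows "\<bar>exp (- z) - 1\<bar> \<le> \<bar>z\<bar> * exp \<bar>z\<bar>"
proof (cases "z \<ge> 0")
  case True
  have "exp (-z) \<ge> 1 - z" using exp_ge_add_one_self[of "-z"] by simp
  moreover have "exp (-z) \<le> 1" using True by simp
  moreover have "z * 1 \<le> z * exp z" using True by (intro mult_left_mono) auto
  ultimately show ?thesis using True by simp
next
  case False
  define b where "b = - z"
  have b: "b > 0" using False b_def by simp
  have "exp (-b) \<ge> 1 - b" using exp_ge_add_one_self[of "-b"] by simp
  hence "exp (-b) * exp b \<ge> (1 - b) * exp b" by (intro mult_right_mono) auto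
  hence "1 \<ge> (1 - b) * exp b" by (simp add: exp_minus field_simps)
  hence "exp b - 1 \<le> b * exp b" by (simp add: algebra_simps)
  moreover have "exp b \<ge> 1" using b by simp
  ultimately show ?thesis using b b_def by simp
qed

lemma lim_exp: "(\<beta>::real) > 0 \<Longrightarrow> ((\<lambda>R. exp (- \<beta> * R / 2)) \<longlongrightarrow> 0) at_top"
  by real_asymp



theorem theorem3p1:
  fixes w :: "'a \<Rightarrow> 'a \<Rightarrow> real" and mu :: "'a \<Rightarrow> real" and d :: "'a \<Rightarrow> 'a \<Rightarrow> real"
    and V u :: "'a \<Rightarrow> real" and p \<beta> c0 s :: real and x0 :: 'a
  assumes "weighted_graph w mu"
    and "infinite (UNIV :: 'a set)"
    and "graph_connected w"
    and "pseudo_metric d"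
    and "intrinsic w mu d"
    and "finite_jump_size w d"
    and "s = jump_size w d"
    and "\<forall>x r. r > 0 \<longrightarrow> finite (ball_d d x r)"
    and "bdd_below (range V)"
    and "c0 = Inf (range V)"
    and "c0 > 0"
    and "\<forall>x. laplacian w mu u x - V x * u x = 0"
    and "p \<ge> 2" and "\<beta> > 0"
    and "\<beta>\<^sup>2 * exp (2 * s * \<beta>) < 2 * c0 * p"
    and "lp_weighted p (\<lambda>x. exp (- \<beta> * d x x0)) mu u"
  shows "\<forall>x. u x = 0"
proof -
  have mu_pos: "\<And>x. mu x > 0" and w_nn: "\<And>x y. w x y \<ge> 0" and w_sym: "\<And>x y. w x y = w y x"
    using assms(1) unfolding weighted_graph_def by auto
  have d_nn: "\<And>x y. d x y \<ge> 0" and d_sym: "\<And>x y. d x y = d y x"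
    and d_tri: "\<And>x y z. d x z \<le> d x y + d y z"
    using assms(4) unfolding pseudo_metric_def by auto
  have V_ge: "\<And>x. V x \<ge> c0"
    using assms(9,10) by (simp add: cInf_lower)
  have edge_le: "\<And>x y. w x y > 0 \<Longrightarrow> d x y \<le> s"
    using assms(6,7) unfolding finite_jump_size_def jump_size_def
    by (auto intro!: cSup_upper)
  have s_nn: "s \<ge> 0"
  proof -
    obtain x y :: 'a where "x \<noteq> y"
      using assms(2) by (metis (full_types) UNIV_I finite.simps insertI1 subsetI subset_antisym
            finite_subset infinite_imp_nonempty insert_absorb singletonD)
    moreover have "(\<lambda>a b. w a b > 0)\<^sup>*\<^sup>* x y" using assms(3) unfolding graph_connected_def by auto
    ultimately obtain z where "w x z > 0"
      by (metis converse_rtranclpE)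
    thus ?thesis using edge_le[of x z] d_nn[of x z] by linarith
  qed
  have ball_fin: "\<And>x r. r > 0 \<Longrightarrow> finite (ball_d d x r)" using assms(8) by auto
  have Nfin: "\<And>x. finite {y. w x y > 0}"
  proof -
    fix x
    have "{y. w x y > 0} \<subseteq> ball_d d x (s+1)"
      unfolding ball_d_def using edge_le d_sym by fastforce
    thus "finite {y. w x y > 0}" using ball_fin[of "s+1" x] s_nn finite_subset by auto
  qed
  have lap: "\<And>x E. finite E \<Longrightarrow> {y. w x y > 0} \<subseteq> E \<Longrightarrow>
      (\<Sum>y\<in>E. (u y - u x) * w x y) = mu x * V x * u x"
  proof -
    fix x E assume E: "finite E" "{y. w x y > 0} \<subseteq> E"
    have "(\<Sum>\<^sub>\<infinity>y. (u y - u x) * w x y) = infsum (\<lambda>y. (u y - u x) * w x y) E"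
    proof (rule infsum_cong_neutral)
      fix y assume "y \<in> UNIV - E"
      hence "\<not> w x y > 0" using E by blast
      hence "w x y = 0" using w_nn[of x y] by linarith
      thus "(u y - u x) * w x y = 0" by simp
    qed auto
    also have "\<dots> = (\<Sum>y\<in>E. (u y - u x) * w x y)" using E by simp
    finally have S: "(\<Sum>\<^sub>\<infinity>y. (u y - u x) * w x y) = (\<Sum>y\<in>E. (u y - u x) * w x y)" .
    have "laplacian w mu u x = V x * u x" using assms(12) by simp
    hence "(1 / mu x) * (\<Sum>y\<in>E. (u y - u x) * w x y) = V x * u x"
      unfolding laplacian_def S .
    thus "(\<Sum>y\<in>E. (u y - u x) * w x y) = mu x * V x * u x"
      using mu_pos[of x] by (simp add: field_simps)
  qed
  define q where "q = p / 2"
  have q1: "q \<ge> 1" using assms(13) q_def by simp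
  define v where "v x = \<bar>u x\<bar> powr q" for x
  define lam where "lam = q * c0"
  have v_nn: "\<And>x. v x \<ge> 0" unfolding v_def by simp
  have v2: "\<And>x. (v x)^2 = \<bar>u x\<bar> powr p"
    unfolding v_def q_def by (simp add: power2_eq_square powr_add[symmetric])
  have key1: "\<And>x E. finite E \<Longrightarrow> {y. w x y > 0} \<subseteq> E \<Longrightarrow>
      lam * mu x * (v x)^2 \<le> v x * (\<Sum>y\<in>E. w x y * (v y - v x))"
  proof -
    fix x E assume E: "finite E" "{y. w x y > 0} \<subseteq> E"
    define g where "g = sgn (u x) * \<bar>u x\<bar> powr (2*q - 1)"
    have gu: "g * u x = (v x)^2"
    proof (cases "u x = 0")
      case True thus ?thesis unfolding g_def v_def by simp
    next
      case False
      have su: "sgn (u x) * u x = \<bar>u x\<bar>" by (simp add: sgn_if)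
      have "g * u x = \<bar>u x\<bar> powr (2*q - 1) * \<bar>u x\<bar>"
        unfolding g_def using su by (metis mult.commute mult.left_commute)
      also have "\<dots> = \<bar>u x\<bar> powr ((2*q - 1) + 1)" using False powr_add[of "\<bar>u x\<bar>" "2*q-1" 1] by simp
      also have "\<dots> = \<bar>u x\<bar> powr (q + q)" by (rule arg_cong[where f="\<lambda>t. \<bar>u x\<bar> powr t"]) simp
      also have "\<dots> = (v x)^2" unfolding v_def by (simp only: power2_eq_square powr_add)
      finally show ?thesis .
    qed
    have "q * mu x * V x * (v x)^2 = q * mu x * V x * (g * u x)" using gu by simp
    also have "\<dots> = q * g * (mu x * V x * u x)" by (simp add: ac_simps)
    also have "\<dots> = q * g * (\<Sum>y\<in>E. (u y - u x) * w x y)"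
      using lap[OF E] by simp
    also have "\<dots> = (\<Sum>y\<in>E. w x y * (q * g * (u y - u x)))"
      by (simp add: sum_distrib_left algebra_simps)
    also have "\<dots> \<le> (\<Sum>y\<in>E. w x y * (v x * (v y - v x)))"
    proof (rule sum_mono)
      fix y
      show "w x y * (q * g * (u y - u x)) \<le> w x y * (v x * (v y - v x))"
        using pointwise_p[OF q1, of "u x" "u y"] w_nn[of x y]
        unfolding g_def v_def by (intro mult_left_mono) (auto simp: mult.assoc)
    qed
    also have "\<dots> = v x * (\<Sum>y\<in>E. w x y * (v y - v x))"
      by (simp add: sum_distrib_left algebra_simps)
    finally have A: "q * mu x * V x * (v x)^2 \<le> v x * (\<Sum>y\<in>E. w x y * (v y - v x))"
      .
    have "lam * mu x * (v x)^2 \<le> q * mu x * V x * (v x)^2"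
      unfolding lam_def using V_ge[of x] q1 mu_pos[of x]
      by (intro mult_right_mono) (auto intro!: mult_left_mono)
    with A show "lam * mu x * (v x)^2 \<le> v x * (\<Sum>y\<in>E. w x y * (v y - v x))" by linarith
  qed
  define f where "f x = \<bar>u x\<bar> powr p * exp (- \<beta> * d x x0) * mu x" for x
  have f_sum: "f summable_on UNIV" using assms(16) unfolding lp_weighted_def f_def by simp
  have f_nn: "\<And>x. f x \<ge> 0" unfolding f_def using mu_pos by (simp add: less_imp_le)
  define S where "S = infsum f UNIV"
  have S_nn: "S \<ge> 0" unfolding S_def using f_nn by (simp add: infsum_nonneg)
  define psi where "psi x = exp (- \<beta> * d x x0 / 2)" for x
  have psi2: "\<And>x. (psi x)^2 = exp (- \<beta> * d x x0)"
    unfolding psi_def by (simp add: power2_eq_square mult_exp_exp)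
  have psi_pos: "\<And>x. psi x > 0" unfolding psi_def by simp
  define K where "K = \<beta>^2 * exp (\<beta> * s) / 4"
  have K_nn: "K \<ge> 0" unfolding K_def by simp
  define xi where "xi R x = max (psi x - exp (- \<beta> * R / 2)) 0" for R x
  have xi_nn: "\<And>R x. xi R x \<ge> 0" unfolding xi_def by simp
  have xi_supp: "\<And>R x. xi R x \<noteq> 0 \<Longrightarrow> d x x0 < R"
  proof -
    fix R x assume "xi R x \<noteq> 0"
    hence "exp (- \<beta> * R / 2) < exp (- \<beta> * d x x0 / 2)" unfolding xi_def psi_def by (auto split: if_splits simp: max_def)
    hence "- \<beta> * R / 2 < - \<beta> * d x x0 / 2" by simp
    thus "d x x0 < R" using assms(14) by (simp add: field_simps)
  qed
  have xi_diff: "\<And>R x y. (xi R y - xi R x)^2 \<le> (psi y - psi x)^2"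
  proof -
    fix R x y
    have "\<bar>xi R y - xi R x\<bar> \<le> \<bar>psi y - psi x\<bar>" unfolding xi_def by (simp add: max_def)
    thus "(xi R y - xi R x)^2 \<le> (psi y - psi x)^2" by (simp add: abs_le_square_iff)
  qed
  have psi_diff: "\<And>x y. w x y > 0 \<Longrightarrow> (psi y - psi x)^2 \<le> K * exp (- \<beta> * d x x0) * (d x y)^2"
  proof -
    fix x y assume wxy: "w x y > 0"
    define z where "z = \<beta> * (d y x0 - d x x0) / 2"
    have dxy: "d x y \<le> s" using edge_le[OF wxy] .
    have t1: "d y x0 - d x x0 \<le> d x y" using d_tri[where x=y and y=x and z=x0] d_sym[of x y] by linarith
    have t2: "d x x0 - d y x0 \<le> d x y" using d_tri[where x=x and y=y and z=x0] by linarith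
    have tt: "\<bar>d y x0 - d x x0\<bar> \<le> d x y" using t1 t2 by linarith
    have "\<bar>z\<bar> = \<beta> * \<bar>d y x0 - d x x0\<bar> / 2" unfolding z_def using assms(14) by (simp add: abs_mult)
    also have "\<dots> \<le> \<beta> * d x y / 2" using tt assms(14) by (intro divide_right_mono mult_left_mono) auto
    finally have zb: "\<bar>z\<bar> \<le> \<beta> * d x y / 2" .
    have zs: "\<bar>z\<bar> \<le> \<beta> * s / 2" using zb dxy assms(14)
      by (smt (verit, best) divide_right_mono mult_left_mono)
    have py: "psi y = psi x * exp (- z)" unfolding psi_def z_def
      by (simp add: mult_exp_exp field_simps)
    have "psi y - psi x = psi x * (exp (- z) - 1)" using py by (simp add: algebra_simps)
    hence "\<bar>psi y - psi x\<bar> = psi x * \<bar>exp (- z) - 1\<bar>"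
      using psi_pos[of x] by (simp add: abs_mult)
    also have "\<dots> \<le> psi x * (\<bar>z\<bar> * exp \<bar>z\<bar>)"
      using exp_bound[of z] psi_pos[of x] by (intro mult_left_mono) auto
    also have "\<dots> \<le> psi x * ((\<beta> * d x y / 2) * exp (\<beta> * s / 2))"
      using zb zs psi_pos[of x] by (intro mult_left_mono mult_mono) auto
    finally have ab: "\<bar>psi y - psi x\<bar> \<le> psi x * ((\<beta> * d x y / 2) * exp (\<beta> * s / 2))" .
    have M0: "psi x * ((\<beta> * d x y / 2) * exp (\<beta> * s / 2)) \<ge> 0"
      using psi_pos[of x] d_nn[of x y] assms(14) by simp
    have "(psi y - psi x)^2 \<le> (psi x * ((\<beta> * d x y / 2) * exp (\<beta> * s / 2)))^2"
      using ab M0 by (simp add: abs_le_square_iff[symmetric])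
    also have "\<dots> = (psi x)^2 * \<beta>^2 * (d x y)^2 / 4 * (exp (\<beta> * s / 2))^2"
      by (simp add: power_mult_distrib power_divide)
    also have "(exp (\<beta> * s / 2))^2 = exp (\<beta> * s)"
      by (simp add: power2_eq_square mult_exp_exp)
    finally show "(psi y - psi x)^2 \<le> K * exp (- \<beta> * d x x0) * (d x y)^2"
      unfolding K_def psi2 by (simp add: field_simps)
  qed
  have wd: "\<And>x (E::'a set). finite E \<Longrightarrow> (\<Sum>y\<in>E. w x y * (d x y)^2) \<le> mu x"
  proof -
    fix x and E :: "'a set" assume E: "finite E"
    have intr: "(\<lambda>y. w x y * d x y powr 2) summable_on UNIV"
      "(1 / mu x) * (\<Sum>\<^sub>\<infinity>y. w x y * d x y powr 2) \<le> 1"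
      using assms(5) unfolding intrinsic_def q_intrinsic_def by auto
    have pw: "\<And>y. d x y powr 2 = (d x y)^2"
    proof -
      fix y show "d x y powr 2 = (d x y)^2"
        using d_nn[of x y] powr_realpow[of "d x y" 2] by (cases "d x y = 0") auto
    qed
    have "(\<Sum>y\<in>E. w x y * (d x y)^2) = (\<Sum>y\<in>E. w x y * d x y powr 2)" by (simp add: pw)
    also have "\<dots> \<le> (\<Sum>\<^sub>\<infinity>y. w x y * d x y powr 2)"
      using E intr(1) w_nn by (intro finite_sum_le_infsum) auto
    also have "\<dots> \<le> mu x" using intr(2) mu_pos[of x] by (simp add: field_simps)
    finally show "(\<Sum>y\<in>E. w x y * (d x y)^2) \<le> mu x" .
  qed
  have mainR: "\<And>R. R > 0 \<Longrightarrow> lam * (\<Sum>x\<in>ball_d d x0 (R+s+1). (xi R x)^2 * mu x * (v x)^2) \<le> K/2 * S"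
  proof -
    fix R :: real assume R: "R > 0"
    define E where "E = ball_d d x0 (R+s+1)"
    have Ef: "finite E" unfolding E_def using ball_fin R s_nn by auto
    define X where "X = xi R"
    have X_nn: "\<And>x. X x \<ge> 0" unfolding X_def using xi_nn by auto
    have nbr: "\<And>x y. X x \<noteq> 0 \<Longrightarrow> w x y > 0 \<Longrightarrow> y \<in> E"
    proof -
      fix x y assume "X x \<noteq> 0" "w x y > 0"
      hence "d x x0 < R" "d x y \<le> s" using xi_supp edge_le unfolding X_def by auto
      moreover have "d y x0 \<le> d y x + d x x0" using d_tri[where x=y and y=x and z=x0] .
      ultimately show "y \<in> E" unfolding E_def ball_d_def using d_sym[of x y] by auto
    qed
    define T where "T = (\<Sum>x\<in>E. \<Sum>y\<in>E. w x y * ((X x)^2 * v x * (v y - v x)))"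
    have a: "lam * (\<Sum>x\<in>E. (X x)^2 * mu x * (v x)^2) \<le> T"
    proof -
      have "lam * (\<Sum>x\<in>E. (X x)^2 * mu x * (v x)^2) = (\<Sum>x\<in>E. (X x)^2 * (lam * mu x * (v x)^2))"
        by (simp add: sum_distrib_left ac_simps)
      also have "\<dots> \<le> (\<Sum>x\<in>E. (X x)^2 * (v x * (\<Sum>y\<in>E. w x y * (v y - v x))))"
      proof (rule sum_mono)
        fix x assume "x \<in> E"
        show "(X x)^2 * (lam * mu x * (v x)^2) \<le> (X x)^2 * (v x * (\<Sum>y\<in>E. w x y * (v y - v x)))"
        proof (cases "X x = 0")
          case True thus ?thesis by simp
        next
          case False
          have "{y. w x y > 0} \<subseteq> E" using nbr[OF False] by auto
          from key1[OF Ef this] show ?thesis by (intro mult_left_mono) auto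
        qed
      qed
      also have "\<dots> = T" unfolding T_def
        by (intro sum.cong refl) (simp add: sum_distrib_left ac_simps)
      finally show ?thesis .
    qed
    define D where "D x y = (X y - X x)^2" for x y
    have D_sym: "\<And>x y. D x y = D y x" unfolding D_def by (simp add: power2_commute)
    have sw: "T = (\<Sum>x\<in>E. \<Sum>y\<in>E. w x y * ((X y)^2 * v y * (v x - v y)))"
      unfolding T_def by (subst sum.swap) (simp add: w_sym)
    have b: "T + T \<le> (\<Sum>x\<in>E. \<Sum>y\<in>E. w x y * (v x * v y * D x y))"
    proof -
      have "T + T = (\<Sum>x\<in>E. \<Sum>y\<in>E. w x y * ((X x)^2 * v x * (v y - v x)) + w x y * ((X y)^2 * v y * (v x - v y)))"
        by (subst (2) sw) (simp add: T_def sum.distrib)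
      also have "\<dots> \<le> (\<Sum>x\<in>E. \<Sum>y\<in>E. w x y * (v x * v y * D x y))"
      proof (intro sum_mono)
        fix x y
        have "w x y * ((X x)^2 * v x * (v y - v x)) + w x y * ((X y)^2 * v y * (v x - v y))
            = w x y * (v x * v y * D x y - (X y * v y - X x * v x)^2)"
          unfolding D_def by (simp add: power2_eq_square algebra_simps)
        also have "\<dots> \<le> w x y * (v x * v y * D x y)"
          using w_nn[of x y] by (intro mult_left_mono) auto
        finally show "w x y * ((X x)^2 * v x * (v y - v x)) + w x y * ((X y)^2 * v y * (v x - v y))
            \<le> w x y * (v x * v y * D x y)" .
      qed
      finally show ?thesis .
    qed
    have c: "(\<Sum>x\<in>E. \<Sum>y\<in>E. w x y * (v x * v y * D x y)) \<le> (\<Sum>x\<in>E. \<Sum>y\<in>E. w x y * ((v x)^2 * D x y))"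
    proof -
      have "(\<Sum>x\<in>E. \<Sum>y\<in>E. w x y * (v x * v y * D x y))
          \<le> (\<Sum>x\<in>E. \<Sum>y\<in>E. w x y * ((v x)^2 * D x y) / 2 + w x y * ((v y)^2 * D x y) / 2)"
      proof (intro sum_mono)
        fix x y
        have "v x * v y \<le> ((v x)^2 + (v y)^2) / 2"
          using zero_le_power2[of "v x - v y"] by (simp add: power2_eq_square algebra_simps)
        hence "w x y * D x y * (v x * v y) \<le> w x y * D x y * (((v x)^2 + (v y)^2) / 2)"
          using w_nn[of x y] by (intro mult_left_mono) (auto simp: D_def)
        thus "w x y * (v x * v y * D x y) \<le> w x y * ((v x)^2 * D x y) / 2 + w x y * ((v y)^2 * D x y) / 2"
          by (simp add: algebra_simps add_divide_distrib)
      qed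
      also have "\<dots> = (\<Sum>x\<in>E. \<Sum>y\<in>E. w x y * ((v x)^2 * D x y)) / 2 + (\<Sum>x\<in>E. \<Sum>y\<in>E. w x y * ((v y)^2 * D x y)) / 2"
        by (simp add: sum.distrib sum_divide_distrib)
      also have "(\<Sum>x\<in>E. \<Sum>y\<in>E. w x y * ((v y)^2 * D x y)) = (\<Sum>x\<in>E. \<Sum>y\<in>E. w x y * ((v x)^2 * D x y))"
        by (subst sum.swap) (simp add: w_sym D_sym)
      finally show ?thesis by simp
    qed
    have dd: "\<And>x. (\<Sum>y\<in>E. w x y * ((v x)^2 * D x y)) \<le> (v x)^2 * K * exp (- \<beta> * d x x0) * mu x"
    proof -
      fix x
      have "(\<Sum>y\<in>E. w x y * D x y) \<le> (\<Sum>y\<in>E. w x y * (K * exp (- \<beta> * d x x0) * (d x y)^2))"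
      proof (rule sum_mono)
        fix y
        show "w x y * D x y \<le> w x y * (K * exp (- \<beta> * d x x0) * (d x y)^2)"
        proof (cases "w x y > 0")
          case True
          have "D x y \<le> K * exp (- \<beta> * d x x0) * (d x y)^2"
            unfolding D_def X_def using xi_diff[of R y x] psi_diff[OF True] by linarith
          thus ?thesis using True by (intro mult_left_mono) auto
        next
          case False
          hence "w x y = 0" using w_nn[of x y] by linarith
          thus ?thesis by simp
        qed
      qed
      also have "\<dots> = K * exp (- \<beta> * d x x0) * (\<Sum>y\<in>E. w x y * (d x y)^2)"
        by (simp add: sum_distrib_left ac_simps)
      also have "\<dots> \<le> K * exp (- \<beta> * d x x0) * mu x"
        using wd[OF Ef, of x] K_nn by (intro mult_left_mono) auto
      finally have "(v x)^2 * (\<Sum>y\<in>E. w x y * D x y) \<le> (v x)^2 * (K * exp (- \<beta> * d x x0) * mu x)"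
        by (intro mult_left_mono) auto
      thus "(\<Sum>y\<in>E. w x y * ((v x)^2 * D x y)) \<le> (v x)^2 * K * exp (- \<beta> * d x x0) * mu x"
        by (simp add: sum_distrib_left ac_simps)
    qed
    have e: "(\<Sum>x\<in>E. (v x)^2 * K * exp (- \<beta> * d x x0) * mu x) \<le> K * S"
    proof -
      have "(\<Sum>x\<in>E. (v x)^2 * K * exp (- \<beta> * d x x0) * mu x) = K * (\<Sum>x\<in>E. f x)"
        unfolding f_def v2 by (simp add: sum_distrib_left ac_simps)
      also have "\<dots> \<le> K * S" unfolding S_def
        using K_nn Ef f_sum f_nn by (intro mult_left_mono finite_sum_le_infsum) auto
      finally show ?thesis .
    qed
    have ddE: "(\<Sum>x\<in>E. \<Sum>y\<in>E. w x y * ((v x)^2 * D x y)) \<le> (\<Sum>x\<in>E. (v x)^2 * K * exp (- \<beta> * d x x0) * mu x)"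
      by (rule sum_mono) (rule dd)
    have "T + T \<le> K * S"
      using b c e ddE by linarith
    with a show "lam * (\<Sum>x\<in>ball_d d x0 (R+s+1). (xi R x)^2 * mu x * (v x)^2) \<le> K/2 * S"
      unfolding E_def X_def by linarith
    qed
  have lam_pos: "lam > 0" unfolding lam_def using q1 assms(11) by simp
  have lamK: "K/2 < lam"
  proof -
    have "exp (\<beta> * s) \<le> exp (2 * s * \<beta>)" using s_nn assms(14) by (simp add: mult_right_mono)
    hence "\<beta>^2 * exp (\<beta> * s) \<le> \<beta>^2 * exp (2 * s * \<beta>)" by (intro mult_left_mono) auto
    hence "\<beta>^2 * exp (\<beta> * s) < 2 * c0 * p" using assms(15) by linarith
    hence "K/2 < c0 * p / 4" unfolding K_def by (simp add: mult.commute mult.left_commute)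
    also have "\<dots> \<le> c0 * p / 2" using assms(11,13) by simp
    also have "\<dots> = lam" unfolding lam_def q_def by simp
    finally show ?thesis .
  qed
  have xi_lim: "\<And>x. ((\<lambda>R. xi R x) \<longlongrightarrow> psi x) at_top"
  proof -
    fix x
    have "((\<lambda>R. max (psi x - exp (- \<beta> * R / 2)) 0) \<longlongrightarrow> max (psi x - 0) 0) at_top"
      by (intro tendsto_max tendsto_diff tendsto_const lim_exp[OF assms(14)])
    thus "((\<lambda>R. xi R x) \<longlongrightarrow> psi x) at_top" unfolding xi_def using psi_pos[of x] by simp
  qed
  have finA: "\<And>A. finite A \<Longrightarrow> lam * sum f A \<le> K/2 * S"
  proof -
    fix A :: "'a set" assume A: "finite A"
    have lim: "((\<lambda>R. lam * (\<Sum>x\<in>A. (xi R x)^2 * mu x * (v x)^2)) \<longlongrightarrow> lam * (\<Sum>x\<in>A. (psi x)^2 * mu x * (v x)^2)) at_top"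
      by (intro tendsto_intros xi_lim)
    have ev: "eventually (\<lambda>R. lam * (\<Sum>x\<in>A. (xi R x)^2 * mu x * (v x)^2) \<le> K/2 * S) at_top"
      using eventually_gt_at_top[of "0::real"]
    proof eventually_elim
      case (elim R)
      define E where "E = ball_d d x0 (R+s+1)"
      have Ef: "finite E" unfolding E_def using ball_fin elim s_nn by auto
      define g where "g x = (xi R x)^2 * mu x * (v x)^2" for x
      have g_nn: "\<And>x. g x \<ge> 0" unfolding g_def using mu_pos v_nn by (simp add: less_imp_le)
      have "sum g A \<le> sum g (A \<union> E)" using A Ef g_nn by (intro sum_mono2) auto
      also have "\<dots> = sum g E"
      proof (rule sum.mono_neutral_right)
        show "\<forall>i\<in>A \<union> E - E. g i = 0"
        proof
          fix i assume i: "i \<in> A \<union> E - E"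
          have "xi R i = 0"
          proof (rule ccontr)
            assume "xi R i \<noteq> 0"
            hence "d i x0 < R" by (rule xi_supp)
            hence "i \<in> E" unfolding E_def ball_d_def using s_nn by auto
            thus False using i by auto
          qed
          thus "g i = 0" unfolding g_def by simp
        qed
      qed (use A Ef in auto)
      finally have "lam * sum g A \<le> lam * sum g E" using lam_pos by (intro mult_left_mono) auto
      also have "\<dots> \<le> K/2 * S" using mainR[OF elim] unfolding g_def E_def .
      finally show ?case unfolding g_def .
    qed
    have "lam * (\<Sum>x\<in>A. (psi x)^2 * mu x * (v x)^2) \<le> K/2 * S"
      using tendsto_upperbound[OF lim ev] by simp
    moreover have "(\<Sum>x\<in>A. (psi x)^2 * mu x * (v x)^2) = sum f A"
      unfolding f_def psi2 v2 by (intro sum.cong refl) (simp add: ac_simps)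
    ultimately show "lam * sum f A \<le> K/2 * S" by simp
  qed
  have "S = (SUP F\<in>{F. finite F \<and> F \<subseteq> UNIV}. sum f F)"
    unfolding S_def using f_sum f_nn by (rule infsum_nonneg_is_SUPREMUM_real)
  also have "\<dots> \<le> K/2 * S / lam"
  proof (rule cSUP_least)
    show "{F. finite F \<and> F \<subseteq> UNIV} \<noteq> {}" by auto
  next
    fix F assume "F \<in> {F. finite F \<and> F \<subseteq> (UNIV::'a set)}"
    hence "lam * sum f F \<le> K/2 * S" using finA by auto
    thus "sum f F \<le> K/2 * S / lam" using lam_pos by (simp add: field_simps)
  qed
  finally have "lam * S \<le> K/2 * S" using lam_pos by (simp add: field_simps)
  hence S0: "S \<le> 0"
  proof -
    assume h: "lam * S \<le> K/2 * S"
    show "S \<le> 0"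
    proof (rule ccontr)
      assume "\<not> S \<le> 0"
      hence "S > 0" by simp
      hence "K/2 * S < lam * S" using lamK by (intro mult_strict_right_mono) auto
      thus False using h by linarith
    qed
  qed
  show ?thesis
  proof
    fix x
    have "f x = 0" using S0 f_sum f_nn unfolding S_def by (intro nonneg_infsum_le_0D) auto
    hence "\<bar>u x\<bar> powr p = 0" unfolding f_def using mu_pos[of x] by simp
    thus "u x = 0" by simp
  qed
qed
end
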